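(* Let $X$ be a compact metric space, $f\colon X\to X$ continuous with $h_{\mathrm{top}}(f)<\infty$, and $\Phi,\Psi\in C(X)^d$. If $A\subset\mathbb{R}^d$ is compact, then for every $\xi\in C(X)$, $$\overline{\mathcal{F}}(A,\xi)=\sup_{\alpha\in A}\overline{\mathcal{F}}(\{\alpha\},\xi).$$
   Context: $S_n\phi(x)=\sum_{k=0}^{n-1}\phi(f^kx)$; $B(x,n,\delta)=\{y\mid d(f^kx,f^ky)<\delta\text{ for }0\le k\le n\}$. $\Phi=(\varphi_1,\dots,\varphi_d)$, $\Psi=(\psi_1,\dots,\psi_d)$, $\mathcal{A}_n(x)=(S_n\varphi_i(x)/S_n\psi_i(x))_{i=1}^d$, and for open $U\subset\mathbb{R}^d$, $G_n(U)=\{x\in X\mid\mathcal{A}_n(x)\in U\}$. For a sequence $(Z_n)$ of subsets of $X$, $\Lambda_n(Z_n,\xi,\delta)=\inf\{\sum_{x\in E}e^{S_n\xi(x)}\mid\bigcup_{x\in E}B(x,n,\delta)\supset Z_n\}$ and $\overline{CP}_{(Z_n)}(\xi)=\lim_{\delta\to0}\limsup_{n\to\infty}\frac1n\log\Lambda_n(Z_n,\xi,\delta)$. The upper coarse spectrum is $\overline{\mathcal{F}}(A,\xi)=\inf_{U\supset A}\overline{CP}_{(G_n(U))}(\xi)$, the infimum over all open $U\subset\mathbb{R}^d$ containing $A$. *)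

theory Defs
  imports "HOL-Analysis.Analysis" "HOL-Library.Extended_Real"
begin

definition birkhoff_sum :: "('a \<Rightarrow> 'a) \<Rightarrow> ('a \<Rightarrow> real) \<Rightarrow> nat \<Rightarrow> 'a \<Rightarrow> real" where
  "birkhoff_sum f \<phi> n x = (\<Sum>k<n. \<phi> ((f ^^ k) x))"

definition bowen_ball :: "'a::metric_space set \<Rightarrow> ('a \<Rightarrow> 'a) \<Rightarrow> 'a \<Rightarrow> nat \<Rightarrow> real \<Rightarrow> 'a set" where
  "bowen_ball X f x n \<delta> = {y \<in> X. \<forall>k\<le>n. dist ((f ^^ k) x) ((f ^^ k) y) < \<delta>}"

text \<open>Lambda_n(Z, xi, delta): infimum over covers by Bowen balls centred at points of X
  (covers with infinitely many centres give an infinite sum since e^{S_n xi} is bounded below,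
  so it suffices to range over finite centre sets).\<close>
definition Lambda_n :: "'a::metric_space set \<Rightarrow> ('a \<Rightarrow> 'a) \<Rightarrow> nat \<Rightarrow> 'a set \<Rightarrow> ('a \<Rightarrow> real) \<Rightarrow> real \<Rightarrow> ereal" where
  "Lambda_n X f n Z \<xi> \<delta> =
     (INF E \<in> {E. finite E \<and> E \<subseteq> X \<and> Z \<subseteq> (\<Union>x\<in>E. bowen_ball X f x n \<delta>)}.
        ereal (\<Sum>x\<in>E. exp (birkhoff_sum f \<xi> n x)))"

definition ereal_log_rate :: "nat \<Rightarrow> ereal \<Rightarrow> ereal" where
  "ereal_log_rate n L = (if L = 0 then - \<infinity> else if L = \<infinity> then \<infinity>
                          else ereal (ln (real_of_ereal L) / real n))"

definition upper_CP :: "'a::metric_space set \<Rightarrow> ('a \<Rightarrow> 'a) \<Rightarrow> (nat \<Rightarrow> 'a set) \<Rightarrow> ('a \<Rightarrow> real) \<Rightarrow> ereal" where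
  "upper_CP X f Z \<xi> =
     Lim (at_right (0::real))
       (\<lambda>\<delta>. limsup (\<lambda>n. ereal_log_rate n (Lambda_n X f n (Z n) \<xi> \<delta>)))"

definition htop :: "'a::metric_space set \<Rightarrow> ('a \<Rightarrow> 'a) \<Rightarrow> ereal" where
  "htop X f = upper_CP X f (\<lambda>_. X) (\<lambda>_. 0)"

definition ratio_avg :: "('a \<Rightarrow> 'a) \<Rightarrow> ('d \<Rightarrow> 'a \<Rightarrow> real) \<Rightarrow> ('d \<Rightarrow> 'a \<Rightarrow> real) \<Rightarrow> nat \<Rightarrow> 'a \<Rightarrow> real ^ 'd::finite" where
  "ratio_avg f \<Phi> \<Psi> n x = (\<chi> i. birkhoff_sum f (\<Phi> i) n x / birkhoff_sum f (\<Psi> i) n x)"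

definition G_set :: "'a set \<Rightarrow> ('a \<Rightarrow> 'a) \<Rightarrow> ('d \<Rightarrow> 'a \<Rightarrow> real) \<Rightarrow> ('d \<Rightarrow> 'a \<Rightarrow> real) \<Rightarrow> nat \<Rightarrow> (real ^ 'd::finite) set \<Rightarrow> 'a set" where
  "G_set X f \<Phi> \<Psi> n U = {x \<in> X. ratio_avg f \<Phi> \<Psi> n x \<in> U}"

definition upper_coarse_spectrum :: "'a::metric_space set \<Rightarrow> ('a \<Rightarrow> 'a) \<Rightarrow> ('d \<Rightarrow> 'a \<Rightarrow> real) \<Rightarrow> ('d \<Rightarrow> 'a \<Rightarrow> real)
     \<Rightarrow> (real ^ 'd::finite) set \<Rightarrow> ('a \<Rightarrow> real) \<Rightarrow> ereal" where
  "upper_coarse_spectrum X f \<Phi> \<Psi> A \<xi> =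
     (INF U \<in> {U. open U \<and> A \<subseteq> U}. upper_CP X f (\<lambda>n. G_set X f \<Phi> \<Psi> n U) \<xi>)"

end

theory Submission
  imports Defs
begin

lemma Lambda_nonneg: "0 \<le> Lambda_n X f n Z \<xi> \<delta>"
  unfolding Lambda_n_def by (rule INF_greatest) (auto intro: sum_nonneg)

lemma rate_mono:
  assumes "0 \<le> a" "a \<le> b"
  shows "ereal_log_rate n a \<le> ereal_log_rate n b"
proof (cases "a = 0 \<or> b = \<infinity>")
  case True then show ?thesis by (auto simp: ereal_log_rate_def)
next
  case False
  then have a0: "a \<noteq> 0" and bi: "b \<noteq> \<infinity>" by auto
  have "a \<noteq> \<infinity>" using bi assms by auto
  then obtain r where r: "a = ereal r" "r > 0" using assms a0
    by (cases a) auto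
  obtain s where s: "b = ereal s" using bi assms r by (cases b) auto
  have "r \<le> s" using assms r s by auto
  then have "ln r \<le> ln s" using r by auto
  then have "ln r / real n \<le> ln s / real n" by (simp add: divide_right_mono)
  then show ?thesis using r s \<open>r \<le> s\<close> by (auto simp: ereal_log_rate_def)
qed

lemma rate_double:
  assumes "0 \<le> b" "n > 0"
  shows "ereal_log_rate n (2 * b) \<le> ereal_log_rate n b + ereal (ln 2 / real n)"
proof (cases b)
  case (real r)
  show ?thesis
  proof (cases "r = 0")
    case True then show ?thesis using real by (simp add: ereal_log_rate_def)
  next
    case False
    then have "r > 0" using real assms by auto
    have "ln (2 * r) / real n = ln r / real n + ln 2 / real n"
      using \<open>r > 0\<close> by (simp add: ln_mult add_divide_distrib)
    then show ?thesis using real \<open>r > 0\<close> by (simp add: ereal_log_rate_def)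
  qed
next
  case PInf then show ?thesis by (simp add: ereal_log_rate_def)
next
  case MInf then show ?thesis using assms by auto
qed

lemma rate_union:
  assumes "0 \<le> a" "0 \<le> b" "n > 0"
  shows "ereal_log_rate n (a + b) \<le> max (ereal_log_rate n a) (ereal_log_rate n b) + ereal (ln 2 / real n)"
proof -
  have gen: "ereal_log_rate n (a + b) \<le> ereal_log_rate n b + ereal (ln 2 / real n)"
    if "0 \<le> a" "a \<le> b" for a b :: ereal
  proof -
    have "a + b \<le> b + b" using that by (intro add_right_mono) auto
    also have "b + b = 2 * b" by (cases b) auto
    finally have "a + b \<le> 2 * b" .
    then have "ereal_log_rate n (a + b) \<le> ereal_log_rate n (2 * b)"
      using that by (intro rate_mono) auto
    also have "\<dots> \<le> ereal_log_rate n b + ereal (ln 2 / real n)"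
      using that assms by (intro rate_double) auto
    finally show ?thesis .
  qed
  show ?thesis
  proof (cases "a \<le> b")
    case True
    have "ereal_log_rate n (a + b) \<le> ereal_log_rate n b + ereal (ln 2 / real n)"
      using gen True assms by auto
    also have "\<dots> \<le> max (ereal_log_rate n a) (ereal_log_rate n b) + ereal (ln 2 / real n)"
      by (intro add_right_mono) auto
    finally show ?thesis .
  next
    case False
    have "ereal_log_rate n (a + b) = ereal_log_rate n (b + a)" by (simp add: add.commute)
    also have "\<dots> \<le> ereal_log_rate n a + ereal (ln 2 / real n)"
      using gen False assms by auto
    also have "\<dots> \<le> max (ereal_log_rate n a) (ereal_log_rate n b) + ereal (ln 2 / real n)"
      by (intro add_right_mono) auto
    finally show ?thesis .
  qed
qed

lemma Lambda_union:
  "Lambda_n X f n (Z \<union> W) \<xi> \<delta> \<le> Lambda_n X f n Z \<xi> \<delta> + Lambda_n X f n W \<xi> \<delta>"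
proof -
  define S where "S = (\<lambda>Z. {E. finite E \<and> E \<subseteq> X \<and> Z \<subseteq> (\<Union>x\<in>E. bowen_ball X f x n \<delta>)})"
  define c where "c = (\<lambda>E. ereal (\<Sum>x\<in>E. exp (birkhoff_sum f \<xi> n x)))"
  have L: "\<And>Z. Lambda_n X f n Z \<xi> \<delta> = (INF E\<in>S Z. c E)"
    unfolding Lambda_n_def S_def c_def by simp
  have cnn: "\<And>E. 0 \<le> c E" unfolding c_def by (auto intro: sum_nonneg)
  have key: "(INF E\<in>S (Z \<union> W). c E) \<le> c E1 + c E2" if "E1 \<in> S Z" "E2 \<in> S W" for E1 E2
  proof -
    have "E1 \<union> E2 \<in> S (Z \<union> W)" using that unfolding S_def by auto
    then have "(INF E\<in>S (Z \<union> W). c E) \<le> c (E1 \<union> E2)" by (rule INF_lower)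
    also have "\<dots> \<le> c E1 + c E2"
    proof -
      have fin: "finite E1" "finite E2" using that unfolding S_def by auto
      have "(\<Sum>x\<in>E1 \<union> E2. exp (birkhoff_sum f \<xi> n x)) + (\<Sum>x\<in>E1 \<inter> E2. exp (birkhoff_sum f \<xi> n x))
          = (\<Sum>x\<in>E1. exp (birkhoff_sum f \<xi> n x)) + (\<Sum>x\<in>E2. exp (birkhoff_sum f \<xi> n x))"
        using fin by (rule sum.union_inter)
      moreover have "0 \<le> (\<Sum>x\<in>E1 \<inter> E2. exp (birkhoff_sum f \<xi> n x))" by (auto intro: sum_nonneg)
      ultimately show ?thesis unfolding c_def by simp
    qed
    finally show ?thesis .
  qed
  show ?thesis
  proof (cases "S Z = {} \<or> S W = {}")
    case True
    then show ?thesis unfolding L using cnn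
      by (auto simp: top_ereal_def)
  next
    case False
    have "(INF E\<in>S (Z \<union> W). c E) \<le> (INF E1\<in>S Z. c E1 + (INF E2\<in>S W. c E2))"
    proof (rule INF_greatest)
      fix E1 assume E1: "E1 \<in> S Z"
      have "(INF E\<in>S (Z \<union> W). c E) \<le> (INF E2\<in>S W. c E1 + c E2)"
        using key E1 by (intro INF_greatest) auto
      also have "\<dots> = c E1 + (INF E2\<in>S W. c E2)"
        using False cnn by (intro INF_ereal_add_right) (auto simp: c_def)
      finally show "(INF E\<in>S (Z \<union> W). c E) \<le> c E1 + (INF E2\<in>S W. c E2)" .
    qed
    also have "\<dots> = (INF E1\<in>S Z. c E1) + (INF E2\<in>S W. c E2)"
    proof (rule INF_ereal_add_left)
      show "S Z \<noteq> {}" using False by auto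
      have "0 \<le> (INF E2\<in>S W. c E2)" using cnn by (auto intro: INF_greatest)
      then show "(INF E2\<in>S W. c E2) \<noteq> - \<infinity>" by auto
    qed (rule cnn)
    finally show ?thesis unfolding L .
  qed
qed


lemma limsup_max:
  fixes u v :: "nat \<Rightarrow> ereal"
  shows "limsup (\<lambda>n. max (u n) (v n)) \<le> max (limsup u) (limsup v)"
proof (rule dense_ge)
  fix z assume z: "max (limsup u) (limsup v) < z"
  have "eventually (\<lambda>n. u n < z) sequentially" using z by (intro Limsup_lessD) auto
  moreover have "eventually (\<lambda>n. v n < z) sequentially" using z by (intro Limsup_lessD) auto
  ultimately have "eventually (\<lambda>n. max (u n) (v n) \<le> z) sequentially"
    by eventually_elim auto
  then show "limsup (\<lambda>n. max (u n) (v n)) \<le> z" by (rule Limsup_bounded)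
qed

lemma antitone_tendsto_SUP:
  fixes g :: "real \<Rightarrow> ereal"
  assumes mono: "\<And>a b. 0 < a \<Longrightarrow> a \<le> b \<Longrightarrow> g b \<le> g a"
  shows "(g \<longlongrightarrow> (SUP d\<in>{0<..}. g d)) (at_right 0)"
proof (rule order_tendstoI)
  fix y assume "y < (SUP d\<in>{0<..}. g d)"
  then obtain d0 where d0: "d0 > 0" "y < g d0" by (auto simp: less_SUP_iff)
  have "eventually (\<lambda>x. x \<in> {0<..<d0}) (at_right (0::real))"
    using d0 by (intro eventually_at_right_real) auto
  then show "eventually (\<lambda>x. y < g x) (at_right 0)"
  proof eventually_elim
    case (elim x)
    then have "g d0 \<le> g x" by (intro mono) auto
    then show ?case using d0 by auto
  qed
next
  fix y assume y: "(SUP d\<in>{0<..}. g d) < y"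
  have "eventually (\<lambda>x. x \<in> {0<..<1}) (at_right (0::real))"
    by (intro eventually_at_right_real) auto
  then show "eventually (\<lambda>x. g x < y) (at_right 0)"
  proof eventually_elim
    case (elim x)
    then have "g x \<le> (SUP d\<in>{0<..}. g d)" by (intro SUP_upper) auto
    then show ?case using y by auto
  qed
qed

lemma Lambda_antitone:
  assumes "a \<le> b"
  shows "Lambda_n X f n Z \<xi> b \<le> Lambda_n X f n Z \<xi> a"
  unfolding Lambda_n_def
proof (rule INF_superset_mono)
  have "bowen_ball X f x n a \<subseteq> bowen_ball X f x n b" for x
    using assms unfolding bowen_ball_def by force
  then show "{E. finite E \<and> E \<subseteq> X \<and> Z \<subseteq> (\<Union>x\<in>E. bowen_ball X f x n a)}
    \<subseteq> {E. finite E \<and> E \<subseteq> X \<and> Z \<subseteq> (\<Union>x\<in>E. bowen_ball X f x n b)}" by blast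
qed auto

lemma CP_eq:
  "upper_CP X f Z \<xi> = (SUP d\<in>{0<..}. limsup (\<lambda>n. ereal_log_rate n (Lambda_n X f n (Z n) \<xi> d)))"
  unfolding upper_CP_def
proof (rule tendsto_Lim)
  show "((\<lambda>d. limsup (\<lambda>n. ereal_log_rate n (Lambda_n X f n (Z n) \<xi> d))) \<longlongrightarrow>
    (SUP d\<in>{0<..}. limsup (\<lambda>n. ereal_log_rate n (Lambda_n X f n (Z n) \<xi> d)))) (at_right 0)"
  proof (rule antitone_tendsto_SUP)
    fix a b :: real assume "0 < a" "a \<le> b"
    show "limsup (\<lambda>n. ereal_log_rate n (Lambda_n X f n (Z n) \<xi> b))
        \<le> limsup (\<lambda>n. ereal_log_rate n (Lambda_n X f n (Z n) \<xi> a))"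
      by (intro Limsup_mono always_eventually allI rate_mono Lambda_nonneg Lambda_antitone \<open>a \<le> b\<close>)
  qed
qed auto

lemma CP_union:
  "upper_CP X f (\<lambda>n. Z n \<union> W n) \<xi> \<le> max (upper_CP X f Z \<xi>) (upper_CP X f W \<xi>)"
  unfolding CP_eq
proof (rule SUP_least)
  fix d :: real assume d: "d \<in> {0<..}"
  define r where "r = (\<lambda>Z d n. ereal_log_rate n (Lambda_n X f n (Z n) \<xi> d))"
  define c where "c = (\<lambda>n::nat. ereal (ln 2 / real n))"
  have "limsup (r (\<lambda>n. Z n \<union> W n) d) \<le> limsup (\<lambda>n. max (r Z d n) (r W d n) + c n)"
  proof (rule Limsup_mono)
    show "eventually (\<lambda>n. r (\<lambda>n. Z n \<union> W n) d n \<le> max (r Z d n) (r W d n) + c n) sequentially"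
      using eventually_gt_at_top[of 0]
    proof eventually_elim
      case (elim n)
      have "r (\<lambda>n. Z n \<union> W n) d n \<le> ereal_log_rate n (Lambda_n X f n (Z n) \<xi> d + Lambda_n X f n (W n) \<xi> d)"
        unfolding r_def by (intro rate_mono Lambda_nonneg Lambda_union)
      also have "\<dots> \<le> max (r Z d n) (r W d n) + c n"
        unfolding r_def c_def using elim by (intro rate_union Lambda_nonneg)
      finally show ?case .
    qed
  qed
  also have "\<dots> \<le> limsup (\<lambda>n. max (r Z d n) (r W d n)) + limsup c"
    by (rule ereal_limsup_add_mono)
  also have "limsup c = 0"
  proof (rule lim_imp_Limsup)
    show "c \<longlonglongrightarrow> 0" unfolding c_def zero_ereal_def
      by (intro tendsto_intros lim_const_over_n)
  qed auto
  also have "limsup (\<lambda>n. max (r Z d n) (r W d n)) + 0 \<le> max (limsup (r Z d)) (limsup (r W d))"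
    using limsup_max by simp
  also have "\<dots> \<le> max (SUP d\<in>{0<..}. limsup (r Z d)) (SUP d\<in>{0<..}. limsup (r W d))"
    using d by (intro max.mono SUP_upper) auto
  finally show "limsup (\<lambda>n. ereal_log_rate n (Lambda_n X f n (Z n \<union> W n) \<xi> d))
     \<le> max (SUP d\<in>{0<..}. limsup (\<lambda>n. ereal_log_rate n (Lambda_n X f n (Z n) \<xi> d)))
            (SUP d\<in>{0<..}. limsup (\<lambda>n. ereal_log_rate n (Lambda_n X f n (W n) \<xi> d)))"
    unfolding r_def by simp
qed


lemma CP_empty: "upper_CP X f (\<lambda>n. {}) \<xi> = - \<infinity>"
proof -
  have "Lambda_n X f n {} \<xi> d = 0" for n d
  proof (rule antisym)
    show "Lambda_n X f n {} \<xi> d \<le> 0" unfolding Lambda_n_def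
      by (rule INF_lower2[of "{}"]) auto
  qed (rule Lambda_nonneg)
  then show ?thesis unfolding CP_eq by (simp add: ereal_log_rate_def Limsup_const)
qed

lemma G_union: "G_set X f \<Phi> \<Psi> n (U \<union> V) = G_set X f \<Phi> \<Psi> n U \<union> G_set X f \<Phi> \<Psi> n V"
  unfolding G_set_def by auto

lemma G_empty: "G_set X f \<Phi> \<Psi> n {} = {}"
  unfolding G_set_def by auto

lemma CP_finite_union:
  assumes "finite T" "\<And>a. a \<in> T \<Longrightarrow> upper_CP X f (\<lambda>n. G_set X f \<Phi> \<Psi> n (U a)) \<xi> < M"
  shows "upper_CP X f (\<lambda>n. G_set X f \<Phi> \<Psi> n (\<Union>a\<in>T. U a)) \<xi> \<le> M"
  using assms
proof (induction T rule: finite_induct)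
  case empty
  then show ?case by (simp add: G_empty CP_empty)
next
  case (insert a T)
  have "upper_CP X f (\<lambda>n. G_set X f \<Phi> \<Psi> n (\<Union>a\<in>insert a T. U a)) \<xi>
      = upper_CP X f (\<lambda>n. G_set X f \<Phi> \<Psi> n (U a) \<union> G_set X f \<Phi> \<Psi> n (\<Union>a\<in>T. U a)) \<xi>"
    by (simp add: G_union)
  also have "\<dots> \<le> max (upper_CP X f (\<lambda>n. G_set X f \<Phi> \<Psi> n (U a)) \<xi>)
                       (upper_CP X f (\<lambda>n. G_set X f \<Phi> \<Psi> n (\<Union>a\<in>T. U a)) \<xi>)"
    by (rule CP_union)
  also have "\<dots> \<le> M" using insert by (auto intro: less_imp_le)
  finally show ?case .
qed

theorem proposition2p1:
  fixes X :: "'a::metric_space set" and f :: "'a \<Rightarrow> 'a"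
    and \<Phi> \<Psi> :: "'d::finite \<Rightarrow> 'a \<Rightarrow> real"
    and A :: "(real ^ 'd) set" and \<xi> :: "'a \<Rightarrow> real"
  assumes "compact X"
    and "continuous_on X f" and "f ` X \<subseteq> X"
    and "htop X f < \<infinity>"
    and "\<And>i. continuous_on X (\<Phi> i)" and "\<And>i. continuous_on X (\<Psi> i)"
    and "compact A"
    and "continuous_on X \<xi>"
  shows "upper_coarse_spectrum X f \<Phi> \<Psi> A \<xi>
           = (SUP \<alpha>\<in>A. upper_coarse_spectrum X f \<Phi> \<Psi> {\<alpha>} \<xi>)"
proof (rule antisym)
  let ?CP = "\<lambda>U. upper_CP X f (\<lambda>n. G_set X f \<Phi> \<Psi> n U) \<xi>"
  show "upper_coarse_spectrum X f \<Phi> \<Psi> A \<xi> \<le> (SUP \<alpha>\<in>A. upper_coarse_spectrum X f \<Phi> \<Psi> {\<alpha>} \<xi>)"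
  proof (rule dense_ge)
    fix M assume M: "(SUP \<alpha>\<in>A. upper_coarse_spectrum X f \<Phi> \<Psi> {\<alpha>} \<xi>) < M"
    have "\<exists>U. open U \<and> \<alpha> \<in> U \<and> ?CP U < M" if "\<alpha> \<in> A" for \<alpha>
    proof -
      have "upper_coarse_spectrum X f \<Phi> \<Psi> {\<alpha>} \<xi> < M"
        using M that by (meson SUP_upper le_less_trans)
      then show ?thesis unfolding upper_coarse_spectrum_def by (auto simp: INF_less_iff)
    qed
    then obtain U where U: "\<And>\<alpha>. \<alpha> \<in> A \<Longrightarrow> open (U \<alpha>) \<and> \<alpha> \<in> U \<alpha> \<and> ?CP (U \<alpha>) < M"
      by metis
    obtain T where T: "T \<subseteq> A" "finite T" "A \<subseteq> (\<Union>a\<in>T. U a)"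
      using compactE_image[OF assms(7), of A U] U by blast
    have "upper_coarse_spectrum X f \<Phi> \<Psi> A \<xi> \<le> ?CP (\<Union>a\<in>T. U a)"
      unfolding upper_coarse_spectrum_def using T U by (intro INF_lower) auto
    also have "\<dots> \<le> M" using T U by (intro CP_finite_union) auto
    finally show "upper_coarse_spectrum X f \<Phi> \<Psi> A \<xi> \<le> M" .
  qed
next
  show "(SUP \<alpha>\<in>A. upper_coarse_spectrum X f \<Phi> \<Psi> {\<alpha>} \<xi>) \<le> upper_coarse_spectrum X f \<Phi> \<Psi> A \<xi>"
  proof (rule SUP_least)
    fix \<alpha> assume "\<alpha> \<in> A"
    then show "upper_coarse_spectrum X f \<Phi> \<Psi> {\<alpha>} \<xi> \<le> upper_coarse_spectrum X f \<Phi> \<Psi> A \<xi>"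
      unfolding upper_coarse_spectrum_def by (intro INF_superset_mono) auto
  qed
qed

end
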